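(* In the setting of the construction below, with $\beta_\epsilon>\tau_2\ge 2$, $M_1$ sufficiently large and $M_{j+1}=M_j^{\beta_\epsilon}$, every weak-* limit $\mu$ of a subsequence of the measures $\mu^{(k)}$ on the torus $\mathbb{R}/\mathbb{Z}$ has support contained in $\mathrm{Tight}^{[0,1)}(\psi_1,\psi_2,\theta)$, the image of $\mathrm{Tight}(\psi_1,\psi_2,\theta)$ in $\mathbb{R}/\mathbb{Z}$.
   Context: For $\psi_2\le\psi_1$ and $\theta\in[0,1)$, $\mathrm{Tight}(\psi_1,\psi_2,\theta)$ is the set of real $x$ such that (i) $|x-\frac{r-\theta}{q}|\le\psi_1(q)$ for infinitely many pairs $(r,q)$ of relatively prime integers, and (ii) for every $c>0$, $|x-\frac{r-\theta}{q}|\le\psi_1(q)-c\psi_2(q)$ for only finitely many such pairs; this set is invariant under integer translations. Construction. Let $\theta\in[0,1)$ be $0$ or irrational with Diophantine approximation exponent $\gamma$ ($\gamma=1$ if $\theta=0$); the Diophantine approximation exponent of an irrational $\theta$ is the infimum of all $\gamma$ such that $|\theta-p/q|\le q^{-\gamma}$ has only finitely many integer solutions. Let $\psi_1,\psi_2:\mathbb{N}\to(0,\infty)$ be decreasing with $\psi_2\le\psi_1$, $\psi_1-\psi_2$ decreasing, $\tau_i=\lambda(\psi_i):=-\lim_{q\to\infty}\frac{\log\psi_i(q)}{\log q}$, and $\beta_\epsilon=\gamma^{-2}(\tau_1-1)^2-\epsilon$ with $\epsilon>0$. Fix a nonnegative, not identically zero, smooth $\phi$ supported in $[-1/2,1/2]$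 with $|\hat\phi(\xi)|\le C\exp(-|\xi|^{3/4})$ for large $|\xi|$. For $M>1$, $c_M=M^{-\epsilon/100}$; for primes $M\le q<2M$ and $0\le r<q$, $x_{q,r}=\frac{r-\theta}{q}+\psi_1(q)-\frac{c_M}{2}\psi_2(q)$ and $\phi_{r,q}(x)=(c_M\psi_2(q))^{-1}\phi((c_M\psi_2(q))^{-1}(x-x_{q,r}))$; $g_M=\sum_q\sum_r\phi_{r,q}$, $f_M=g_M/\hat g_M(0)$. Let $f_M^{[0,1)}$ be the function on $\mathbb{R}/\mathbb{Z}$ induced by $x\mapsto\sum_{j\in\mathbb{Z}}f_M(x+j)$, and $\mu^{(k)}=\prod_{j=1}^kf_{M_j}^{[0,1)}$, viewed as an absolutely continuous measure on the torus. *)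

theory Defs
  imports "HOL-Analysis.Analysis" "HOL-Computational_Algebra.Primes"
begin

definition Tight :: "(nat \<Rightarrow> real) \<Rightarrow> (nat \<Rightarrow> real) \<Rightarrow> real \<Rightarrow> real set" where
  "Tight \<psi>1 \<psi>2 \<theta> = {x.
     infinite {(r, q). (q::nat) \<ge> 1 \<and> coprime (r::int) (int q) \<and>
                 \<bar>x - (r - \<theta>) / q\<bar> \<le> \<psi>1 q} \<and>
     (\<forall>c>0. finite {(r, q). (q::nat) \<ge> 1 \<and> coprime (r::int) (int q) \<and>
                 \<bar>x - (r - \<theta>) / q\<bar> \<le> \<psi>1 q - c * \<psi>2 q})}"

definition dioph_good :: "real \<Rightarrow> real set" where
  "dioph_good \<theta> = {g. finite {(p, q). (q::int) > 0 \<and> \<bar>\<theta> - of_int (p::int) / of_int q\<bar> \<le> q powr (- g)}}"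

definition dioph_exp :: "real \<Rightarrow> real" where
  "dioph_exp \<theta> = Inf (dioph_good \<theta>)"

definition smooth_fun :: "(real \<Rightarrow> real) \<Rightarrow> bool" where
  "smooth_fun f \<longleftrightarrow> (\<forall>n. (deriv ^^ n) f differentiable_on UNIV)"

definition fourier :: "(real \<Rightarrow> real) \<Rightarrow> real \<Rightarrow> complex" where
  "fourier f \<xi> = integral\<^sup>L lborel (\<lambda>x. complex_of_real (f x) * cis (- 2 * pi * x * \<xi>))"

definition cM :: "real \<Rightarrow> real \<Rightarrow> real" where
  "cM \<epsilon> M = M powr (- \<epsilon> / 100)"

definition xqr :: "real \<Rightarrow> (nat \<Rightarrow> real) \<Rightarrow> (nat \<Rightarrow> real) \<Rightarrow> real \<Rightarrow> real \<Rightarrow> nat \<Rightarrow> nat \<Rightarrow> real" where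
  "xqr \<theta> \<psi>1 \<psi>2 \<epsilon> M q r = (real r - \<theta>) / real q + \<psi>1 q - cM \<epsilon> M / 2 * \<psi>2 q"

definition phi_rq :: "(real \<Rightarrow> real) \<Rightarrow> real \<Rightarrow> (nat \<Rightarrow> real) \<Rightarrow> (nat \<Rightarrow> real) \<Rightarrow> real
    \<Rightarrow> real \<Rightarrow> nat \<Rightarrow> nat \<Rightarrow> real \<Rightarrow> real" where
  "phi_rq \<phi> \<theta> \<psi>1 \<psi>2 \<epsilon> M q r x =
     (1 / (cM \<epsilon> M * \<psi>2 q)) * \<phi> ((x - xqr \<theta> \<psi>1 \<psi>2 \<epsilon> M q r) / (cM \<epsilon> M * \<psi>2 q))"

definition gM :: "(real \<Rightarrow> real) \<Rightarrow> real \<Rightarrow> (nat \<Rightarrow> real) \<Rightarrow> (nat \<Rightarrow> real) \<Rightarrow> real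
    \<Rightarrow> real \<Rightarrow> real \<Rightarrow> real" where
  "gM \<phi> \<theta> \<psi>1 \<psi>2 \<epsilon> M x =
     (\<Sum>q \<in> {q::nat. prime q \<and> M \<le> real q \<and> real q < 2 * M}.
        \<Sum>r<q. phi_rq \<phi> \<theta> \<psi>1 \<psi>2 \<epsilon> M q r x)"

text \<open>hat g_M(0) is the integral of g_M over the real line.\<close>
definition fM :: "(real \<Rightarrow> real) \<Rightarrow> real \<Rightarrow> (nat \<Rightarrow> real) \<Rightarrow> (nat \<Rightarrow> real) \<Rightarrow> real
    \<Rightarrow> real \<Rightarrow> real \<Rightarrow> real" where
  "fM \<phi> \<theta> \<psi>1 \<psi>2 \<epsilon> M x =
     gM \<phi> \<theta> \<psi>1 \<psi>2 \<epsilon> M x / integral\<^sup>L lborel (gM \<phi> \<theta> \<psi>1 \<psi>2 \<epsilon> M)"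

text \<open>Periodisation: the function on R/Z, represented as a 1-periodic function on R.\<close>
definition fM_per :: "(real \<Rightarrow> real) \<Rightarrow> real \<Rightarrow> (nat \<Rightarrow> real) \<Rightarrow> (nat \<Rightarrow> real) \<Rightarrow> real
    \<Rightarrow> real \<Rightarrow> real \<Rightarrow> real" where
  "fM_per \<phi> \<theta> \<psi>1 \<psi>2 \<epsilon> M x = (\<Sum>\<^sub>\<infinity>j::int. fM \<phi> \<theta> \<psi>1 \<psi>2 \<epsilon> M (x + of_int j))"

text \<open>Scale sequence: Mseq M1 beta n = M_(n+1), i.e. M_1 = M1, M_(j+1) = M_j^beta.\<close>
primrec Mseq :: "real \<Rightarrow> real \<Rightarrow> nat \<Rightarrow> real" where
  "Mseq M1 \<beta> 0 = M1"
| "Mseq M1 \<beta> (Suc n) = Mseq M1 \<beta> n powr \<beta>"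

text \<open>Density of mu^(k) = prod_(j=1..k) f_(M_j)^[0,1).\<close>
definition mu_dens :: "(real \<Rightarrow> real) \<Rightarrow> real \<Rightarrow> (nat \<Rightarrow> real) \<Rightarrow> (nat \<Rightarrow> real) \<Rightarrow> real
    \<Rightarrow> real \<Rightarrow> real \<Rightarrow> nat \<Rightarrow> real \<Rightarrow> real" where
  "mu_dens \<phi> \<theta> \<psi>1 \<psi>2 \<epsilon> \<beta> M1 k x =
     (\<Prod>j<k. fM_per \<phi> \<theta> \<psi>1 \<psi>2 \<epsilon> (Mseq M1 \<beta> j) x)"

text \<open>A measure on R/Z is represented by a finite Borel measure on R concentrated on [0,1);
  continuous functions on R/Z are the continuous 1-periodic functions on R.\<close>
definition torus_measure :: "real measure \<Rightarrow> bool" where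
  "torus_measure \<mu> \<longleftrightarrow> sets \<mu> = sets borel \<and> finite_measure \<mu> \<and>
     emeasure \<mu> (UNIV - {0..<1}) = 0"

definition torus_support :: "real measure \<Rightarrow> real set" where
  "torus_support \<mu> = {x. \<forall>e>0. emeasure \<mu> {y. \<exists>j::int. \<bar>y + of_int j - x\<bar> < e} > 0}"

definition torus_weak_star_lim :: "(nat \<Rightarrow> real \<Rightarrow> real) \<Rightarrow> real measure \<Rightarrow> bool" where
  "torus_weak_star_lim d \<mu> \<longleftrightarrow>
     (\<forall>h::real \<Rightarrow> real. continuous_on UNIV h \<longrightarrow> (\<forall>x. h (x + 1) = h x) \<longrightarrow>
        ((\<lambda>n. LINT x:{0..<1}|lborel. h x * d n x) \<longlonglongrightarrow> integral\<^sup>L \<mu> h))"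

end

theory Submission
  imports Defs
begin

lemma finite_pos_lower:
  fixes f :: "'a \<Rightarrow> real"
  assumes "finite S" "\<forall>x\<in>S. 0 < f x"
  shows "\<exists>\<kappa>>0. \<forall>x\<in>S. \<kappa> \<le> f x"
  using assms
proof (induction S rule: finite_induct)
  case empty then show ?case by (auto intro: exI[of _ 1])
next
  case (insert a S)
  then obtain k where k: "k > 0" "\<forall>x\<in>S. k \<le> f x" by auto
  show ?case using k insert.prems
    by (intro exI[of _ "min k (f a)"]) auto
qed

lemma good_gt1:
  assumes "g \<in> dioph_good \<theta>"
  shows "g > 1"
proof (rule ccontr)
  assume "\<not> g > 1"
  hence g1: "g \<le> 1" by simp
  let ?S = "{(p, q). (q::int) > 0 \<and> \<bar>\<theta> - of_int (p::int) / of_int q\<bar> \<le> q powr (- g)}"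
  have fin: "finite ?S" using assms by (simp add: dioph_good_def)
  have sub: "(\<lambda>q::nat. (\<lfloor>real q * \<theta>\<rfloor>, int q)) ` {1..} \<subseteq> ?S"
  proof
    fix z assume "z \<in> (\<lambda>q::nat. (\<lfloor>real q * \<theta>\<rfloor>, int q)) ` {1..}"
    then obtain q :: nat where q: "q \<ge> 1" "z = (\<lfloor>real q * \<theta>\<rfloor>, int q)" by auto
    have qp: "real q > 0" using q by simp
    have "\<bar>\<theta> - \<lfloor>real q * \<theta>\<rfloor> / real q\<bar> = \<bar>real q * \<theta> - \<lfloor>real q * \<theta>\<rfloor>\<bar> / real q"
      using qp by (simp add: field_simps abs_divide)
    also have "\<dots> \<le> 1 / real q"
      using qp by (intro divide_right_mono) (linarith, simp)
    also have "1 / real q = real q powr (-1)" using qp by (simp add: powr_minus_divide)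
    also have "\<dots> \<le> real q powr (- g)" using q g1 by (intro powr_mono) auto
    finally show "z \<in> ?S" using q by simp
  qed
  have inj: "inj_on (\<lambda>q::nat. (\<lfloor>real q * \<theta>\<rfloor>, int q)) {1..}"
    by (auto simp: inj_on_def)
  have "infinite ({1..} :: nat set)" by (simp add: infinite_Ici)
  hence "infinite ((\<lambda>q::nat. (\<lfloor>real q * \<theta>\<rfloor>, int q)) ` {1..})"
    using finite_imageD[OF _ inj] by blast
  with sub fin show False using finite_subset by blast
qed

lemma powr_le1_aux: "1 \<le> (Mx::real) \<Longrightarrow> 1 \<le> g \<Longrightarrow> Mx powr (1 - g) \<le> 1"
  using powr_mono[of "1-g" 0 Mx] by simp

lemma int_dist_frac:
  fixes y :: real and P :: int
  shows "min (y - \<lfloor>y\<rfloor>) (\<lfloor>y\<rfloor> + 1 - y) \<le> \<bar>of_int P - y\<bar>"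
proof (cases "P \<le> \<lfloor>y\<rfloor>")
  case True
  hence "real_of_int P \<le> \<lfloor>y\<rfloor>" by linarith
  then show ?thesis by linarith
next
  case False
  hence "real_of_int P \<ge> \<lfloor>y\<rfloor> + 1" by linarith
  then show ?thesis by linarith
qed

lemma sep_core:
  fixes \<theta> g :: real
  assumes h\<theta>: "\<theta> = 0 \<or> (\<theta> \<notin> \<rat> \<and> g \<in> dioph_good \<theta>)" and g1: "g \<ge> 1"
  shows "\<exists>\<kappa>>0. \<kappa> \<le> 1 \<and> (\<forall>(P::int) (D::int) (Mx::real). of_int P - \<theta> * of_int D \<noteq> 0 \<longrightarrow>
            of_int \<bar>D\<bar> \<le> Mx \<longrightarrow> 1 \<le> Mx \<longrightarrow> \<kappa> * Mx powr (1-g) \<le> \<bar>of_int P - \<theta> * of_int D\<bar>)"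
proof (cases "\<theta> = 0")
  case True
  show ?thesis
  proof (intro exI[of _ 1] conjI allI impI)
    fix P D :: int and Mx :: real
    assume "of_int P - \<theta> * of_int D \<noteq> 0" "1 \<le> Mx"
    hence "P \<noteq> 0" "Mx powr (1-g) \<le> 1" using True powr_le1_aux g1 by auto
    hence "1 \<le> \<bar>real_of_int P\<bar>" by linarith
    then show "1 * Mx powr (1-g) \<le> \<bar>of_int P - \<theta> * of_int D\<bar>" using True \<open>Mx powr (1-g) \<le> 1\<close> by simp
  qed auto
next
  case False
  with h\<theta> have irr: "\<theta> \<notin> \<rat>" and gg: "g \<in> dioph_good \<theta>" by auto
  define F where "F = {(p, q). (q::int) > 0 \<and> \<bar>\<theta> - of_int (p::int) / of_int q\<bar> \<le> q powr (- g)}"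
  have finF: "finite F" using gg by (simp add: dioph_good_def F_def)
  obtain K0 :: int where K0: "\<forall>z\<in>F. snd z < K0"
  proof -
    have "finite (snd ` F)" using finF by simp
    then have "\<forall>d\<in>snd ` F. d \<le> Max (insert 0 (snd ` F))" by simp
    then obtain B where "\<forall>d\<in>snd ` F. d \<le> B" by blast
    then show ?thesis using that[of "B+1"] by force
  qed
  define S where "S = {D::int. D \<noteq> 0 \<and> \<bar>D\<bar> < K0}"
  have finS: "finite S"
  proof -
    have "S \<subseteq> {-K0..K0}" by (auto simp: S_def)
    then show ?thesis using finite_subset by blast
  qed
  define f where "f D = min (\<theta> * of_int D - \<lfloor>\<theta> * of_int D\<rfloor>) (\<lfloor>\<theta> * of_int D\<rfloor> + 1 - \<theta> * of_int D)" for D :: int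
  have notint: "\<theta> * of_int D \<noteq> of_int n" if "D \<noteq> 0" for D n :: int
  proof
    assume "\<theta> * of_int D = of_int n"
    hence "\<theta> = of_int n / of_int D" using that by (simp add: field_simps)
    hence "\<theta> \<in> \<rat>" by simp
    with irr show False by simp
  qed
  have fpos: "\<forall>D\<in>S. 0 < f D"
  proof
    fix D assume "D \<in> S"
    hence "D \<noteq> 0" by (simp add: S_def)
    from notint[OF this, of "\<lfloor>\<theta> * of_int D\<rfloor>"] have "\<theta> * of_int D \<noteq> \<lfloor>\<theta> * of_int D\<rfloor>" .
    hence "\<theta> * of_int D > \<lfloor>\<theta> * of_int D\<rfloor>" using of_int_floor_le[of "\<theta> * of_int D"] by linarith
    moreover have "\<theta> * of_int D < \<lfloor>\<theta> * of_int D\<rfloor> + 1" by linarith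
    ultimately show "0 < f D" by (simp add: f_def)
  qed
  obtain \<kappa>0 where k0: "\<kappa>0 > 0" "\<forall>D\<in>S. \<kappa>0 \<le> f D" using finite_pos_lower[OF finS fpos] by blast
  show ?thesis
  proof (intro exI[of _ "min 1 \<kappa>0"] conjI allI impI)
    fix P D :: int and Mx :: real
    assume ne: "of_int P - \<theta> * of_int D \<noteq> 0" and DM: "of_int \<bar>D\<bar> \<le> Mx" and M1: "1 \<le> Mx"
    have pw: "Mx powr (1-g) \<le> 1" using powr_le1_aux[OF M1 g1] .
    have pw0: "0 \<le> Mx powr (1-g)" by simp
    consider "D = 0" | "D \<noteq> 0 \<and> \<bar>D\<bar> < K0" | "\<bar>D\<bar> \<ge> K0 \<and> D \<noteq> 0" by linarith
    then show "min 1 \<kappa>0 * Mx powr (1-g) \<le> \<bar>of_int P - \<theta> * of_int D\<bar>"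
    proof cases
      case 1
      hence "P \<noteq> 0" using ne by auto
      hence "1 \<le> \<bar>real_of_int P\<bar>" by linarith
      moreover have "min 1 \<kappa>0 * Mx powr (1-g) \<le> 1" using pw pw0 k0(1)
        by (meson min.cobounded1 mult_le_one order_trans less_imp_le min.boundedI zero_le_one)
      ultimately show ?thesis using 1 by simp
    next
      case 2
      hence "D \<in> S" by (simp add: S_def)
      hence "\<kappa>0 \<le> \<bar>of_int P - \<theta> * of_int D\<bar>" using k0(2) int_dist_frac[of "\<theta> * of_int D" P]
        unfolding f_def by fastforce
      moreover have "min 1 \<kappa>0 * Mx powr (1-g) \<le> \<kappa>0" using pw pw0 k0(1)
        by (metis min.cobounded2 mult_left_mono mult.right_neutral order_trans less_imp_le min.boundedI zero_le_one)
      ultimately show ?thesis by linarith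
    next
      case 3
      define d where "d = \<bar>D\<bar>"
      define p where "p = (if D > 0 then P else - P)"
      have dpos: "d > 0" using 3 by (simp add: d_def)
      have "(p, d) \<notin> F" using K0 3 by (auto simp: d_def)
      hence lt: "\<bar>\<theta> - of_int p / of_int d\<bar> > d powr (- g)" using dpos by (auto simp: F_def)
      have eq: "\<bar>\<theta> - of_int p / of_int d\<bar> = \<bar>of_int P - \<theta> * of_int D\<bar> / of_int d"
        using dpos 3 by (auto simp: p_def d_def field_simps abs_if)
      have "real_of_int d powr (1-g) = d * d powr (-g)" using dpos
        using powr_add[of "real_of_int d" 1 "-g"] by simp
      also have "\<dots> < \<bar>of_int P - \<theta> * of_int D\<bar>" using lt eq dpos
        by (simp add: field_simps)
      finally have A: "real_of_int d powr (1-g) < \<bar>of_int P - \<theta> * of_int D\<bar>" .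
      have B: "Mx powr (1-g) \<le> real_of_int d powr (1-g)" using DM dpos g1
        by (intro powr_mono2') (auto simp: d_def)
      have "min 1 \<kappa>0 * Mx powr (1-g) \<le> Mx powr (1-g)" using pw0 k0(1) by (intro mult_left_le_one_le) auto
      then show ?thesis using A B by linarith
    qed
  qed (use k0 in auto)
qed

lemma frac_eq:
  fixes \<theta> :: real and r R :: int and q Q :: nat
  assumes h\<theta>: "\<theta> = 0 \<or> \<theta> \<notin> \<rat>" and cop: "coprime r (int q)" and q2: "q \<ge> 2" and pQ: "prime Q"
    and eq: "(of_int r - \<theta>) / real q = (of_int R - \<theta>) / real Q"
  shows "q = Q \<and> r = R"
proof -
  have Qp: "real Q > 0" using pQ prime_gt_0_nat by simp
  have qp: "real q > 0" using q2 by simp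
  from eq have E: "(of_int r - \<theta>) * real Q = (of_int R - \<theta>) * real q"
    using Qp qp by (simp add: field_simps)
  have "q = Q"
  proof (cases "\<theta> = 0")
    case True
    with E have "r * int Q = R * int q" by (metis mult.commute of_int_eq_iff of_int_mult of_int_of_nat_eq diff_zero)
    hence "int q dvd r * int Q" by (metis dvd_triv_right)
    hence "int q dvd int Q" using cop by (simp add: coprime_commute coprime_dvd_mult_right_iff)
    hence "q dvd Q" by simp
    with pQ q2 show ?thesis using prime_nat_iff by auto
  next
    case False
    with h\<theta> have irr: "\<theta> \<notin> \<rat>" by simp
    show ?thesis
    proof (rule ccontr)
      assume "q \<noteq> Q"
      hence ne: "real q - real Q \<noteq> 0" by simp
      from E have "\<theta> * (real q - real Q) = of_int R * real q - of_int r * real Q" by (simp add: algebra_simps)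
      hence "\<theta> = (of_int R * real q - of_int r * real Q) / (real q - real Q)" using ne by (simp add: field_simps)
      hence "\<theta> \<in> \<rat>" by simp
      with irr show False by simp
    qed
  qed
  with eq qp show ?thesis by (simp add: field_simps)
qed

lemma close_lemma:
  fixes \<psi>1 :: "nat \<Rightarrow> real" and \<theta> x \<kappa> g \<eta> :: real and A B :: int and q q' N1 :: nat
  assumes sep: "\<forall>(P::int) (D::int) (Mx::real). of_int P - \<theta> * of_int D \<noteq> 0 \<longrightarrow>
            of_int \<bar>D\<bar> \<le> Mx \<longrightarrow> 1 \<le> Mx \<longrightarrow> \<kappa> * Mx powr (1-g) \<le> \<bar>of_int P - \<theta> * of_int D\<bar>"
    and kpos: "\<kappa> > 0"
    and dec: "\<And>q q'. 1 \<le> q \<Longrightarrow> q \<le> q' \<Longrightarrow> \<psi>1 q' \<le> \<psi>1 q"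
    and bnd: "\<And>q. q \<ge> N1 \<Longrightarrow> \<psi>1 q \<le> real q powr (-1-\<eta>)"
    and N1: "N1 \<ge> 1" and qN: "q \<ge> N1" and qq: "q \<le> q'"
    and c1: "\<bar>x - (of_int A - \<theta>) / real q\<bar> \<le> \<psi>1 q"
    and c2: "\<bar>x - (of_int B - \<theta>) / real q'\<bar> \<le> \<psi>1 q'"
    and ne: "(of_int A - \<theta>) / real q \<noteq> (of_int B - \<theta>) / real q'"
  shows "\<eta> * ln (real q) \<le> (ln 2 - ln \<kappa>) + g * ln (real q')"
proof -
  have q1: "q \<ge> 1" using qN N1 by simp
  have qp: "real q > 0" and qp': "real q' > 0" using q1 qq by auto
  define P where "P = A * int q' - B * int q"
  define D where "D = int q' - int q"
  have key: "of_int P - \<theta> * of_int D = ((of_int A - \<theta>) / real q - (of_int B - \<theta>) / real q') * (real q * real q')"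
    using qp qp' by (simp add: P_def D_def field_simps)
  have nz: "of_int P - \<theta> * of_int D \<noteq> 0" using key ne qp qp' by simp
  have Dle: "of_int \<bar>D\<bar> \<le> real q'" using qq by (simp add: D_def)
  have "\<kappa> * real q' powr (1-g) \<le> \<bar>of_int P - \<theta> * of_int D\<bar>"
    using sep nz Dle q1 qq by auto
  also have "\<dots> = \<bar>(of_int A - \<theta>) / real q - (of_int B - \<theta>) / real q'\<bar> * (real q * real q')"
    using key qp qp' by (simp add: abs_mult)
  also have "\<dots> \<le> (\<psi>1 q + \<psi>1 q') * (real q * real q')"
    using c1 c2 qp qp' by (intro mult_right_mono) auto
  also have "\<dots> \<le> (2 * real q powr (-1-\<eta>)) * (real q * real q')"
    using dec[OF q1 qq] bnd[OF qN] qp qp' by (intro mult_right_mono) auto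
  also have "\<dots> = 2 * real q' * real q powr (-\<eta>)"
    using qp powr_add[of "real q" "-1-\<eta>" 1] by (simp add: algebra_simps)
  finally have I: "\<kappa> * real q' powr (1-g) \<le> 2 * real q' * real q powr (-\<eta>)" .
  have "ln (\<kappa> * real q' powr (1-g)) \<le> ln (2 * real q' * real q powr (-\<eta>))"
    using I kpos qp' qp by (subst ln_le_cancel_iff) auto
  then have "ln \<kappa> + (1-g) * ln (real q') \<le> ln 2 + ln (real q') + (-\<eta>) * ln (real q)"
    using kpos qp qp' by (simp add: ln_mult)
  then show ?thesis by (simp add: algebra_simps)
qed

lemma coprime_level:
  fixes q r :: nat and m :: int
  assumes "prime q" "0 < r" "r < q"
  shows "coprime (int r - m * int q) (int q)"
proof -
  have pq: "prime (int q)" using assms by simp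
  have "\<not> int q dvd int r" using assms by (auto dest: dvd_imp_le)
  have "\<not> int q dvd (int r - m * int q)"
  proof
    assume "int q dvd (int r - m * int q)"
    hence "int q dvd (int r - m * int q) + m * int q" by (intro dvd_add) auto
    thus False using \<open>\<not> int q dvd int r\<close> by simp
  qed
  hence "coprime (int q) (int r - m * int q)" using prime_imp_coprime[OF pq] by blast
  thus ?thesis by (simp add: coprime_commute)
qed

lemma Mgrowth:
  fixes M :: "nat \<Rightarrow> real" and \<beta> :: real
  assumes Mnext: "\<And>j. M (Suc j) = M j powr \<beta>" and M0: "M 0 \<ge> 2" and b2: "\<beta> \<ge> 2"
  shows "M j \<ge> M 0 + j \<and> M (Suc j) \<ge> 2 * M j"
proof (induction j)
  case 0
  have "M 0 powr 2 \<le> M 0 powr \<beta>" using M0 b2 by (intro powr_mono) auto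
  moreover have "M 0 powr 2 = M 0 ^ 2" using M0 by simp
  moreover have "2 * M 0 \<le> M 0 * M 0" using M0 by (intro mult_right_mono) auto
  ultimately have "M (Suc 0) \<ge> 2 * M 0" using Mnext[of 0] by (simp add: power2_eq_square)
  then show ?case by simp
next
  case (Suc j)
  hence Mj: "M (Suc j) \<ge> 2" using M0 by linarith
  have "M (Suc j) powr 2 \<le> M (Suc j) powr \<beta>" using Mj b2 by (intro powr_mono) auto
  moreover have "M (Suc j) powr 2 = M (Suc j) ^ 2" using Mj by simp
  moreover have "2 * M (Suc j) \<le> M (Suc j) * M (Suc j)" using Mj by (intro mult_right_mono) auto
  ultimately have "M (Suc (Suc j)) \<ge> 2 * M (Suc j)" using Mnext[of "Suc j"] by (simp add: power2_eq_square)
  with Suc M0 show ?case by (simp; linarith)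
qed

lemma powr_inv_le: "1 \<le> (q::real) \<Longrightarrow> 0 \<le> \<eta> \<Longrightarrow> q powr (-1-\<eta>) \<le> 1 / q"
proof -
  assume "1 \<le> q" "0 \<le> \<eta>"
  hence "q powr (-1-\<eta>) \<le> q powr (-1)" by (intro powr_mono) auto
  also have "\<dots> = 1 / q" using \<open>1 \<le> q\<close> by (simp add: powr_minus_divide)
  finally show ?thesis .
qed

lemma gap_alg:
  fixes \<eta> g \<beta> K Lj Lq L' L0 :: real
  assumes eta: "\<eta> > 0" and g: "g > 0" and Delta: "\<eta>^2 - g^2*\<beta> > 0"
    and big: "(\<eta>^2 - g^2*\<beta>) * L0 > (\<eta>+g)*K + g^2 * ln 2"
    and L0: "L0 \<le> Lj"
    and h1: "\<eta> * Lj \<le> K + g * Lq" and h2: "\<eta> * Lq \<le> K + g * L'" and h3: "L' \<le> ln 2 + \<beta> * Lj"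
  shows False
proof -
  have a: "\<eta> * (\<eta> * Lj) \<le> \<eta> * (K + g * Lq)" using h1 eta by (intro mult_left_mono) auto
  have b: "g * (\<eta> * Lq) \<le> g * (K + g * L')" using h2 g by (intro mult_left_mono) auto
  have c: "g * (g * L') \<le> g * (g * (ln 2 + \<beta> * Lj))" using h3 g by (intro mult_left_mono) auto
  have d: "(\<eta>^2 - g^2*\<beta>) * L0 \<le> (\<eta>^2 - g^2*\<beta>) * Lj" using L0 Delta by (intro mult_left_mono) auto
  from a b c d big show False by (simp add: algebra_simps power2_eq_square)
qed

lemma stepB:
  fixes \<theta> x \<epsilon> \<beta> \<kappa> g \<eta> :: real and \<psi>1 \<psi>2 :: "nat \<Rightarrow> real" and M :: "nat \<Rightarrow> real"
    and qj rj :: "nat \<Rightarrow> nat" and Rj :: "nat \<Rightarrow> int" and N1 :: nat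
  assumes h\<theta>: "\<theta> = 0 \<or> \<theta> \<notin> \<rat>" and th0: "0 \<le> \<theta>" and th1: "\<theta> < 1"
    and p1: "\<And>q. q \<ge> 1 \<Longrightarrow> \<psi>1 q > 0" and p2: "\<And>q. q \<ge> 1 \<Longrightarrow> \<psi>2 q > 0"
    and ple: "\<And>q. q \<ge> 1 \<Longrightarrow> \<psi>2 q \<le> \<psi>1 q"
    and dec: "\<And>q q'. 1 \<le> q \<Longrightarrow> q \<le> q' \<Longrightarrow> \<psi>1 q' \<le> \<psi>1 q"
    and sep: "\<forall>(P::int) (D::int) (Mx::real). of_int P - \<theta> * of_int D \<noteq> 0 \<longrightarrow>
            of_int \<bar>D\<bar> \<le> Mx \<longrightarrow> 1 \<le> Mx \<longrightarrow> \<kappa> * Mx powr (1-g) \<le> \<bar>of_int P - \<theta> * of_int D\<bar>"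
    and kpos: "\<kappa> > 0"
    and bnd: "\<And>q. q \<ge> N1 \<Longrightarrow> \<psi>1 q \<le> real q powr (-1-\<eta>)"
    and N1: "N1 \<ge> 4" and eta: "\<eta> > 0" and gpos: "g > 0" and b2: "\<beta> \<ge> 2" and eps: "\<epsilon> > 0"
    and Mnext: "\<And>j. M (Suc j) = M j powr \<beta>" and M0: "M 0 \<ge> real N1"
    and big: "(\<eta>^2 - g^2*\<beta>) * ln (M 0) > (\<eta>+g)*(ln 2 - ln \<kappa>) + g^2 * ln 2"
    and Delta: "\<eta>^2 - g^2*\<beta> > 0"
    and lev: "\<And>j. prime (qj j) \<and> M j \<le> real (qj j) \<and> real (qj j) < 2 * M j \<and> rj j < qj j \<and>
              (\<exists>m::int. Rj j = int (rj j) - m * int (qj j)) \<and>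
              \<psi>1 (qj j) - M j powr (-\<epsilon>/100) * \<psi>2 (qj j) \<le> x - (of_int (Rj j) - \<theta>) / real (qj j) \<and>
              x - (of_int (Rj j) - \<theta>) / real (qj j) \<le> \<psi>1 (qj j)"
  shows "x \<in> Tight \<psi>1 \<psi>2 \<theta>"
proof -
  have M02: "M 0 \<ge> 2" using M0 N1 by linarith
  have Mg: "\<And>j. M j \<ge> M 0 + j \<and> M (Suc j) \<ge> 2 * M j" using Mgrowth[OF Mnext M02 b2] by blast
  have qge: "\<And>j. real (qj j) \<ge> M 0 + j" using Mg lev by (meson order_trans)
  have qN: "\<And>j. qj j \<ge> N1"
  proof -
    fix j have "real (qj j) \<ge> real N1" using qge[of j] M0 by linarith
    thus "qj j \<ge> N1" by simp
  qed
  have q2: "\<And>j. qj j \<ge> 2" proof -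
    fix j show "qj j \<ge> 2" using qN[of j] N1 by linarith
  qed
  have q1: "\<And>j. qj j \<ge> 1" proof -
    fix j show "qj j \<ge> 1" using q2[of j] by linarith
  qed
  have qmono: "\<And>j. qj j < qj (Suc j)"
  proof -
    fix j
    have "real (qj j) < 2 * M j" using lev by blast
    also have "\<dots> \<le> M (Suc j)" using Mg by blast
    also have "\<dots> \<le> real (qj (Suc j))" using lev by blast
    finally show "qj j < qj (Suc j)" by simp
  qed
  have smq: "strict_mono qj" using qmono strict_mono_Suc_iff by blast
  have Mpos: "\<And>j. M j > 1" proof -
    fix j show "M j > 1" using Mg[of j] M02 by simp
  qed
  have lnnext: "\<And>j. ln (real (qj (Suc j))) \<le> ln 2 + \<beta> * ln (real (qj j))"
  proof -
    fix j
    have "real (qj (Suc j)) < 2 * M (Suc j)" using lev by blast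
    also have "\<dots> = 2 * M j powr \<beta>" using Mnext by simp
    also have "\<dots> \<le> 2 * real (qj j) powr \<beta>" using lev[of j] Mpos[of j] b2 by (intro mult_left_mono powr_mono2) auto
    finally have "real (qj (Suc j)) \<le> 2 * real (qj j) powr \<beta>" by simp
    hence "ln (real (qj (Suc j))) \<le> ln (2 * real (qj j) powr \<beta>)" using q1[of "Suc j"] q1[of j] by (subst ln_le_cancel_iff) auto
    also have "\<dots> = ln 2 + \<beta> * ln (real (qj j))" using q1[of j] by (simp add: ln_mult)
    finally show "ln (real (qj (Suc j))) \<le> ln 2 + \<beta> * ln (real (qj j))" .
  qed
  have cj1: "\<And>j. M j powr (-\<epsilon>/100) < 1" using Mpos eps by (intro powr_less_one) auto
  have lj: "\<And>j. 0 < x - (of_int (Rj j) - \<theta>) / real (qj j) \<and> x - (of_int (Rj j) - \<theta>) / real (qj j) \<le> \<psi>1 (qj j)"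
  proof -
    fix j
    have "0 < \<psi>1 (qj j) - M j powr (-\<epsilon>/100) * \<psi>2 (qj j)"
    proof -
      have "M j powr (-\<epsilon>/100) * \<psi>2 (qj j) < 1 * \<psi>2 (qj j)" using cj1[of j] p2[OF q1[of j]] by (intro mult_strict_right_mono) auto
      thus ?thesis using ple[OF q1[of j]] by simp
    qed
    thus "?thesis j" using lev[of j] by linarith
  qed
  define K where "K = ln 2 - ln \<kappa>"
  have cover: "\<And>q. qj 0 \<le> q \<Longrightarrow> \<exists>j. qj j \<le> q \<and> q < qj (Suc j)"
  proof -
    fix q assume q0: "qj 0 \<le> q"
    have ex: "q < qj (Suc q)" using qge[of "Suc q"] M02 by simp
    define j0 where "j0 = (LEAST j. q < qj j)"
    have j0: "q < qj j0" unfolding j0_def by (rule LeastI[of "\<lambda>j. q < qj j", OF ex])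
    have "j0 \<noteq> 0"
    proof
      assume "j0 = 0" with j0 q0 show False by simp
    qed
    then obtain j where jj: "j0 = Suc j" by (cases j0) auto
    have "\<not> q < qj j" using not_less_Least[of j "\<lambda>j. q < qj j"] jj j0_def by simp
    thus "\<exists>j. qj j \<le> q \<and> q < qj (Suc j)" using j0 jj by (intro exI[of _ j]) auto
  qed
  have gap: "\<And>j q. qj j \<le> q \<Longrightarrow> \<eta> * ln (real (qj j)) \<le> K + g * ln (real q) \<Longrightarrow>
                 \<eta> * ln (real q) \<le> K + g * ln (real (qj (Suc j))) \<Longrightarrow> False"
  proof -
    fix j q assume a: "qj j \<le> q" "\<eta> * ln (real (qj j)) \<le> K + g * ln (real q)"
      "\<eta> * ln (real q) \<le> K + g * ln (real (qj (Suc j)))"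
    have "ln (M 0) \<le> ln (real (qj j))" using qge[of j] M02 by (subst ln_le_cancel_iff) auto
    then show False using gap_alg[OF eta gpos Delta _ _ a(2) a(3) lnnext[of j]] big unfolding K_def by blast
  qed
  have part2: "\<forall>c>0. finite {(r, q). (q::nat) \<ge> 1 \<and> coprime (r::int) (int q) \<and>
                 \<bar>x - (r - \<theta>) / q\<bar> \<le> \<psi>1 q - c * \<psi>2 q}"
  proof (intro allI impI)
    fix c :: real assume c: "c > 0"
    define Qb :: nat where "Qb = max (qj 0) 2 + nat \<lceil>2 * c powr (-100/\<epsilon>)\<rceil>"
    define Rb :: real where "Rb = 1 + real Qb * (\<bar>x\<bar> + \<psi>1 1)"
    have qbound: "q \<le> Qb" if qq: "q \<ge> 1" "coprime r (int q)" "\<bar>x - (of_int r - \<theta>) / real q\<bar> \<le> \<psi>1 q - c * \<psi>2 q" for r q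
    proof (rule ccontr)
      assume "\<not> q \<le> Qb"
      hence qbig: "q \<ge> qj 0" "q \<ge> 2" "real q > 2 * c powr (-100/\<epsilon>)" unfolding Qb_def by linarith+
      obtain j where j: "qj j \<le> q" "q < qj (Suc j)" using cover[OF qbig(1)] by blast
      have "c * \<psi>2 q > 0" using c p2[OF qq(1)] by simp
      hence cl: "\<bar>x - (of_int r - \<theta>) / real q\<bar> \<le> \<psi>1 q" using qq(3) by linarith
      have lj': "\<bar>x - (of_int (Rj j) - \<theta>) / real (qj j)\<bar> \<le> \<psi>1 (qj j)" using lj[of j] by auto
      have lj'': "\<bar>x - (of_int (Rj (Suc j)) - \<theta>) / real (qj (Suc j))\<bar> \<le> \<psi>1 (qj (Suc j))" using lj[of "Suc j"] by auto
      show False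
      proof (cases "(of_int r - \<theta>) / real q = (of_int (Rj j) - \<theta>) / real (qj j)")
        case True
        have pj: "prime (qj j)" using lev by blast
        from frac_eq[OF h\<theta> qq(2) qbig(2) pj True] have e: "q = qj j" "r = Rj j" by auto
        have "\<psi>1 q - M j powr (-\<epsilon>/100) * \<psi>2 q \<le> \<psi>1 q - c * \<psi>2 q"
          using lev[of j] qq(3) e by auto
        hence "c * \<psi>2 q \<le> M j powr (-\<epsilon>/100) * \<psi>2 q" by simp
        hence cle: "c \<le> M j powr (-\<epsilon>/100)" using p2[OF qq(1)] by simp
        have "M j = (M j powr (-\<epsilon>/100)) powr (-100/\<epsilon>)"
          using Mpos[of j] eps by (simp add: powr_powr)
        also have "\<dots> \<le> c powr (-100/\<epsilon>)" using cle c eps by (intro powr_mono2') auto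
        finally have "M j \<le> c powr (-100/\<epsilon>)" .
        moreover have "real q < 2 * M j" using lev[of j] e by auto
        ultimately show False using qbig(3) by linarith
      next
        case False
        have A: "\<eta> * ln (real (qj j)) \<le> K + g * ln (real q)"
          unfolding K_def
          by (rule close_lemma[OF sep kpos dec bnd _ qN[of j] j(1) lj' cl not_sym[OF False]]) (use N1 in auto)
        have ne2: "(of_int r - \<theta>) / real q \<noteq> (of_int (Rj (Suc j)) - \<theta>) / real (qj (Suc j))"
        proof
          assume eq: "(of_int r - \<theta>) / real q = (of_int (Rj (Suc j)) - \<theta>) / real (qj (Suc j))"
          have pj: "prime (qj (Suc j))" using lev by blast
          from frac_eq[OF h\<theta> qq(2) qbig(2) pj eq] j(2) show False by auto
        qed
        have qN': "q \<ge> N1" using qN[of j] j(1) by linarith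
        have B: "\<eta> * ln (real q) \<le> K + g * ln (real (qj (Suc j)))"
          unfolding K_def
          by (rule close_lemma[OF sep kpos dec bnd _ qN' _ cl lj'' ne2]) (use N1 j(2) in auto)
        show False using gap[OF j(1) A B] .
      qed
    qed
    have rbound: "\<bar>of_int r\<bar> \<le> Rb" if qq: "q \<ge> 1" "coprime r (int q)" "\<bar>x - (of_int r - \<theta>) / real q\<bar> \<le> \<psi>1 q - c * \<psi>2 q" for r q
    proof -
      have qQ: "q \<le> Qb" using qbound[OF qq] .
      have "c * \<psi>2 q > 0" using c p2[OF qq(1)] by simp
      moreover have "\<psi>1 q \<le> \<psi>1 1" using dec[of 1 q] qq(1) by simp
      ultimately have "\<bar>x - (of_int r - \<theta>) / real q\<bar> \<le> \<psi>1 1" using qq(3) by linarith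
      hence "\<bar>x - (of_int r - \<theta>) / real q\<bar> * real q \<le> \<psi>1 1 * real q" using qq(1) by (intro mult_right_mono) auto
      moreover have "\<bar>x - (of_int r - \<theta>) / real q\<bar> * real q = \<bar>x * real q - of_int r + \<theta>\<bar>"
        using qq(1) by (simp add: abs_mult[symmetric] field_simps)
      ultimately have h: "\<bar>x * real q - of_int r + \<theta>\<bar> \<le> \<psi>1 1 * real q" by simp
      have "\<bar>x * real q\<bar> \<le> \<bar>x\<bar> * real Qb" using qQ by (simp add: abs_mult mult_left_mono)
      moreover have "\<psi>1 1 * real q \<le> \<psi>1 1 * real Qb" using qQ p1[of 1] by (intro mult_left_mono) auto
      ultimately show ?thesis using h th0 th1 unfolding Rb_def by (simp add: algebra_simps)
    qed
    have "{(r, q). (q::nat) \<ge> 1 \<and> coprime (r::int) (int q) \<and> \<bar>x - (r - \<theta>) / q\<bar> \<le> \<psi>1 q - c * \<psi>2 q}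
          \<subseteq> {-\<lceil>Rb\<rceil>..\<lceil>Rb\<rceil>} \<times> {..Qb}"
    proof (clarsimp)
      fix r q assume a: "Suc 0 \<le> q" "coprime r (int q)" "\<bar>x - (of_int r - \<theta>) / real q\<bar> \<le> \<psi>1 q - c * \<psi>2 q"
      have "\<bar>of_int r\<bar> \<le> Rb" using rbound[of q r] a by auto
      hence "real_of_int \<bar>r\<bar> \<le> of_int \<lceil>Rb\<rceil>" using le_of_int_ceiling[of Rb] by linarith
      hence "\<bar>r\<bar> \<le> \<lceil>Rb\<rceil>" by linarith
      moreover have "q \<le> Qb" using qbound[of q r] a by auto
      ultimately show "- \<lceil>Rb\<rceil> \<le> r \<and> r \<le> \<lceil>Rb\<rceil> \<and> q \<le> Qb" by auto
    qed
    then show "finite {(r, q). (q::nat) \<ge> 1 \<and> coprime (r::int) (int q) \<and> \<bar>x - (r - \<theta>) / q\<bar> \<le> \<psi>1 q - c * \<psi>2 q}"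
      by (rule finite_subset) auto
  qed
  have part1: "infinite {(r, q). (q::nat) \<ge> 1 \<and> coprime (r::int) (int q) \<and> \<bar>x - (r - \<theta>) / q\<bar> \<le> \<psi>1 q}"
    (is "infinite ?G")
  proof
    assume finG: "finite ?G"
    have finJ: "finite {j. rj j \<noteq> 0}"
    proof (rule ccontr)
      assume inf: "infinite {j. rj j \<noteq> 0}"
      have sub: "(\<lambda>j. (Rj j, qj j)) ` {j. rj j \<noteq> 0} \<subseteq> ?G"
      proof clarsimp
        fix j assume rj: "0 < rj j"
        obtain m where m: "Rj j = int (rj j) - m * int (qj j)" using lev[of j] by blast
        have "coprime (Rj j) (int (qj j))" unfolding m using lev[of j] rj by (intro coprime_level) auto
        moreover have "\<bar>x - (of_int (Rj j) - \<theta>) / real (qj j)\<bar> \<le> \<psi>1 (qj j)" using lj[of j] by auto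
        ultimately show "Suc 0 \<le> qj j \<and> coprime (Rj j) (int (qj j)) \<and> \<bar>x - (of_int (Rj j) - \<theta>) / real (qj j)\<bar> \<le> \<psi>1 (qj j)"
          using q1[of j] by auto
      qed
      have "inj_on (\<lambda>j. (Rj j, qj j)) {j. rj j \<noteq> 0}" using strict_mono_imp_inj_on[OF smq]
        by (auto simp: inj_on_def)
      hence "infinite ((\<lambda>j. (Rj j, qj j)) ` {j. rj j \<noteq> 0})" using inf finite_imageD by blast
      with sub finG show False using finite_subset by blast
    qed
    then obtain J where J: "\<And>j. rj j \<noteq> 0 \<Longrightarrow> j < J" using finite_nat_set_iff_bounded by auto
    define n where "n j = Rj j div int (qj j)" for j
    have Rn: "Rj j = n j * int (qj j)" if "j \<ge> J" for j
    proof -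
      have "rj j = 0" using J[of j] that by auto
      then obtain m where m: "Rj j = - m * int (qj j)" using lev[of j] by auto
      have m': "Rj j = (- m) * int (qj j)" using m by simp
      have "n j = - m" unfolding n_def m' using q1[of j] nonzero_mult_div_cancel_right[of "int (qj j)" "-m"] by linarith
      thus ?thesis using m by simp
    qed
    have v: "0 < x - of_int (n j) + \<theta> / real (qj j) \<and> x - of_int (n j) + \<theta> / real (qj j) \<le> \<psi>1 (qj j)"
      if "j \<ge> J" for j
    proof -
      have "(of_int (Rj j) - \<theta>) / real (qj j) = of_int (n j) - \<theta> / real (qj j)"
        using Rn[OF that] q1[of j] by (simp add: field_simps)
      thus ?thesis using lj[of j] by simp
    qed
    have pb: "\<psi>1 (qj j) \<le> 1 / real (qj j)" for j
      using bnd[OF qN[of j]] powr_inv_le[of "real (qj j)" \<eta>] q1[of j] eta by simp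
    have q4: "real (qj j) \<ge> 4" for j using qN[of j] N1 by simp
    have small: "\<psi>1 (qj j) \<le> 1/4 \<and> \<theta> / real (qj j) < 1/4" for j
    proof -
      have "1 / real (qj j) \<le> 1/4" using q4[of j] by (simp add: field_simps)
      moreover have "\<theta> / real (qj j) < 1 / real (qj j)" using th1 q4[of j] by (simp add: divide_strict_right_mono)
      ultimately show ?thesis using pb[of j] by linarith
    qed
    have nconst: "n j = n J" if "j \<ge> J" for j
    proof -
      have t0: "\<theta> / real (qj j) \<ge> 0" "\<theta> / real (qj J) \<ge> 0" using th0 by auto
      have a: "\<bar>x - of_int (n j)\<bar> \<le> 1/4" using v[OF that] small[of j] t0 by linarith
      have b: "\<bar>x - of_int (n J)\<bar> \<le> 1/4" using v[of J] small[of J] t0 by linarith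
      have "\<bar>of_int (n j - n J)\<bar> < (1::real)" using a b by (simp only: of_int_diff; linarith)
      thus ?thesis by linarith
    qed
    define u where "u = x - of_int (n J)"
    have U: "0 < u + \<theta> / real (qj j) \<and> u + \<theta> / real (qj j) \<le> \<psi>1 (qj j)" if "j \<ge> J" for j
      using v[OF that] nconst[OF that] unfolding u_def by simp
    have bigq: "\<exists>j\<ge>J. real (qj j) > t" for t :: real
    proof -
      define j where "j = J + nat \<lceil>t\<rceil> + 1"
      have "real (qj j) \<ge> M 0 + j" using qge by blast
      hence "real (qj j) > t" unfolding j_def using M02 by linarith
      thus ?thesis unfolding j_def by (intro exI[of _ "J + nat \<lceil>t\<rceil> + 1"]) auto
    qed
    consider "u > 0" | "u < 0" | "u = 0" by linarith
    then show False
    proof cases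
      case 1
      obtain j where j: "j \<ge> J" "real (qj j) > 1 / u" using bigq by blast
      have qp: "real (qj j) > 0" using q1[of j] by simp
      have "1 / real (qj j) < u" using j(2) 1 qp by (simp add: field_simps)
      moreover have "u \<le> 1 / real (qj j)"
      proof -
        have "\<theta> / real (qj j) \<ge> 0" using th0 by auto
        thus ?thesis using U[OF j(1)] pb[of j] by linarith
      qed
      ultimately show False by simp
    next
      case 2
      obtain j where j: "j \<ge> J" "real (qj j) > 1 / (- u)" using bigq by blast
      have qp: "real (qj j) > 0" using q1[of j] by simp
      have "1 / real (qj j) < - u" using j(2) 2 qp by (simp add: field_simps)
      moreover have "\<theta> / real (qj j) < 1 / real (qj j)" using th1 q4[of j] by (simp add: divide_strict_right_mono)
      ultimately show False using U[OF j(1)] by linarith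
    next
      case 3
      have tpos: "\<theta> > 0"
      proof (rule ccontr)
        assume "\<not> \<theta> > 0"
        hence "\<theta> = 0" using th0 by simp
        thus False using U[of J] 3 by simp
      qed
      obtain j where j: "j \<ge> J" "real (qj j) > \<theta> powr (-1/\<eta>)" using bigq by blast
      have qp: "real (qj j) > 0" using q1[of j] by simp
      have "\<theta> / real (qj j) \<le> real (qj j) powr (-1-\<eta>)" using U[OF j(1)] 3 bnd[OF qN[of j]] by simp
      hence "\<theta> \<le> real (qj j) powr (-1-\<eta>) * real (qj j)" using qp by (simp add: field_simps)
      also have "\<dots> = real (qj j) powr (-\<eta>)" using qp powr_add[of "real (qj j)" "-1-\<eta>" 1] by simp
      also have "\<dots> < (\<theta> powr (-1/\<eta>)) powr (-\<eta>)" using j(2) eta tpos by (intro powr_less_mono2_neg) auto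
      also have "\<dots> = \<theta>" using eta tpos by (simp add: powr_powr)
      finally show False by simp
    qed
  qed
  show ?thesis unfolding Tight_def by (intro CollectI conjI part1 part2)
qed

lemma cos_shift_int: "cos (2 * pi * (t + of_int i)) = cos (2 * pi * t)"
proof -
  have "cos (2 * pi * (t + of_int i)) = cos (2 * pi * t + (2 * pi) * of_int i)" by (simp add: algebra_simps)
  also have "\<dots> = cos (2 * pi * t)" by (simp add: cos_add)
  finally show ?thesis .
qed

lemma cos_near:
  fixes e t :: real
  assumes e: "0 < e" "e \<le> 1/2"
  shows "cos (2 * pi * e) < cos (2 * pi * t) \<longleftrightarrow> (\<exists>i::int. \<bar>t + of_int i\<bar> < e)"
proof
  assume c: "cos (2 * pi * e) < cos (2 * pi * t)"
  define i where "i = - \<lfloor>t + 1/2\<rfloor>"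
  define s where "s = t + of_int i"
  have s: "\<bar>s\<bar> \<le> 1/2" unfolding s_def i_def by linarith
  have "cos (2 * pi * t) = cos (2 * pi * \<bar>s\<bar>)"
  proof -
    have "cos (2 * pi * t) = cos (2 * pi * s)" unfolding s_def by (rule cos_shift_int[symmetric])
    also have "\<dots> = cos \<bar>2 * pi * s\<bar>" by simp
    also have "\<bar>2 * pi * s\<bar> = 2 * pi * \<bar>s\<bar>" by (simp add: abs_mult)
    finally show ?thesis .
  qed
  with c have "cos (2 * pi * e) < cos (2 * pi * \<bar>s\<bar>)" by simp
  hence "2 * pi * \<bar>s\<bar> < 2 * pi * e" using s e
    by (subst (asm) cos_mono_less_eq) (auto simp: field_simps)
  hence "\<bar>s\<bar> < e" by simp
  thus "\<exists>i::int. \<bar>t + of_int i\<bar> < e" unfolding s_def by blast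
next
  assume "\<exists>i::int. \<bar>t + of_int i\<bar> < e"
  then obtain i :: int where i: "\<bar>t + of_int i\<bar> < e" by blast
  define s where "s = t + of_int i"
  have "cos (2 * pi * t) = cos (2 * pi * \<bar>s\<bar>)"
  proof -
    have "cos (2 * pi * t) = cos (2 * pi * s)" unfolding s_def by (rule cos_shift_int[symmetric])
    also have "\<dots> = cos \<bar>2 * pi * s\<bar>" by simp
    also have "\<bar>2 * pi * s\<bar> = 2 * pi * \<bar>s\<bar>" by (simp add: abs_mult)
    finally show ?thesis .
  qed
  moreover have "cos (2 * pi * e) < cos (2 * pi * \<bar>s\<bar>)"
    using i e unfolding s_def by (subst cos_mono_less_eq) (auto simp: field_simps)
  ultimately show "cos (2 * pi * e) < cos (2 * pi * t)" by simp
qed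

definition Wlev :: "real \<Rightarrow> (nat \<Rightarrow> real) \<Rightarrow> (nat \<Rightarrow> real) \<Rightarrow> real \<Rightarrow> real \<Rightarrow> real \<Rightarrow> bool" where
  "Wlev \<theta> \<psi>1 \<psi>2 \<epsilon> M y \<longleftrightarrow> (\<exists>q r (m::int). prime q \<and> M \<le> real q \<and> real q < 2 * M \<and> r < q \<and>
       \<bar>y + of_int m - xqr \<theta> \<psi>1 \<psi>2 \<epsilon> M q r\<bar> \<le> cM \<epsilon> M * \<psi>2 q / 2)"

lemma fMper_zero:
  assumes M: "M > 0" and p2: "\<And>q. q \<ge> 1 \<Longrightarrow> \<psi>2 q > 0"
    and phi_supp: "\<And>x. \<bar>x\<bar> > 1/2 \<Longrightarrow> \<phi> x = 0"
    and nW: "\<not> Wlev \<theta> \<psi>1 \<psi>2 \<epsilon> M y"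
  shows "fM_per \<phi> \<theta> \<psi>1 \<psi>2 \<epsilon> M y = 0"
proof -
  have g0: "gM \<phi> \<theta> \<psi>1 \<psi>2 \<epsilon> M (y + of_int i) = 0" for i :: int
    unfolding gM_def
  proof (intro sum.neutral ballI)
    fix q r assume q: "q \<in> {q::nat. prime q \<and> M \<le> real q \<and> real q < 2 * M}" and r: "r \<in> {..<q}"
    have q1: "q \<ge> 1" using q prime_gt_0_nat by (auto simp: Suc_le_eq)
    define w where "w = cM \<epsilon> M * \<psi>2 q"
    have wpos: "w > 0" unfolding w_def cM_def using M p2[OF q1] by simp
    have "\<not> \<bar>y + of_int i - xqr \<theta> \<psi>1 \<psi>2 \<epsilon> M q r\<bar> \<le> w / 2"
      using nW q r unfolding Wlev_def w_def by auto
    hence "\<bar>(y + of_int i - xqr \<theta> \<psi>1 \<psi>2 \<epsilon> M q r) / w\<bar> > 1/2"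
      using wpos by (simp add: abs_divide field_simps)
    thus "phi_rq \<phi> \<theta> \<psi>1 \<psi>2 \<epsilon> M q r (y + of_int i) = 0"
      unfolding phi_rq_def w_def[symmetric] using phi_supp by simp
  qed
  show ?thesis unfolding fM_per_def fM_def g0 by simp
qed

lemma Mseq_pos: "M1 > 0 \<Longrightarrow> Mseq M1 \<beta> j > 0"
  by (induction j) auto

lemma gap_open:
  assumes M: "M > 0" and p2: "\<And>q. q \<ge> 1 \<Longrightarrow> \<psi>2 q > 0"
    and nW: "\<not> Wlev \<theta> \<psi>1 \<psi>2 \<epsilon> M x"
  shows "\<exists>e>0. e \<le> 1/2 \<and> (\<forall>y. (\<exists>i::int. \<bar>y + of_int i - x\<bar> < e) \<longrightarrow> \<not> Wlev \<theta> \<psi>1 \<psi>2 \<epsilon> M y)"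
proof -
  define N where "N = nat \<lceil>2 * M\<rceil>"
  define I where "I = {(q, r). prime q \<and> M \<le> real q \<and> real q < 2 * M \<and> r < q}"
  have finI: "finite I"
  proof -
    have "I \<subseteq> {..N} \<times> {..N}"
    proof clarsimp
      fix q r assume "(q, r) \<in> I"
      hence "real q < 2 * M" "r < q" by (auto simp: I_def)
      hence "q \<le> N" unfolding N_def by linarith
      thus "q \<le> N \<and> r \<le> N" using \<open>r < q\<close> by simp
    qed
    thus ?thesis using finite_subset by blast
  qed
  define c where "c q r = xqr \<theta> \<psi>1 \<psi>2 \<epsilon> M q r" for q r
  define w where "w q = cM \<epsilon> M * \<psi>2 q / 2" for q
  define m0 where "m0 q r = \<lfloor>c q r - x\<rfloor>" for q r
  define f where "f z = min (c (fst z) (snd z) - x - m0 (fst z) (snd z) - w (fst z))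
                            (x + m0 (fst z) (snd z) + 1 - c (fst z) (snd z) - w (fst z))" for z
  have fpos: "\<forall>z\<in>I. 0 < f z"
  proof
    fix z assume z: "z \<in> I"
    obtain q r where qr: "z = (q, r)" by (cases z)
    have h1: "\<not> \<bar>x + of_int (m0 q r) - c q r\<bar> \<le> w q" using nW z qr unfolding Wlev_def I_def c_def w_def by blast
    have h2: "\<not> \<bar>x + of_int (m0 q r + 1) - c q r\<bar> \<le> w q" using nW z qr unfolding Wlev_def I_def c_def w_def by blast
    have a: "of_int (m0 q r) \<le> c q r - x" "c q r - x < of_int (m0 q r) + 1" unfolding m0_def by linarith+
    show "0 < f z" using h1 h2 a unfolding f_def qr by auto
  qed
  obtain \<kappa> where k: "\<kappa> > 0" "\<forall>z\<in>I. \<kappa> \<le> f z" using finite_pos_lower[OF finI fpos] by blast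
  define e where "e = min (1/2) \<kappa>"
  show ?thesis
  proof (intro exI[of _ e] conjI allI impI)
    show "e > 0" "e \<le> 1/2" using k by (auto simp: e_def)
    fix y assume "\<exists>i::int. \<bar>y + of_int i - x\<bar> < e"
    then obtain i :: int where i: "\<bar>y + of_int i - x\<bar> < e" by blast
    show "\<not> Wlev \<theta> \<psi>1 \<psi>2 \<epsilon> M y"
    proof
      assume "Wlev \<theta> \<psi>1 \<psi>2 \<epsilon> M y"
      then obtain q r and m :: int where qr: "prime q" "M \<le> real q" "real q < 2 * M" "r < q"
        and close: "\<bar>y + of_int m - c q r\<bar> \<le> w q" unfolding Wlev_def c_def w_def by blast
      have zI: "(q, r) \<in> I" using qr by (simp add: I_def)
      have fk: "e \<le> f (q, r)" using k zI by (auto simp: e_def)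
      have a: "of_int (m0 q r) \<le> c q r - x" "c q r - x < of_int (m0 q r) + 1" unfolding m0_def by linarith+
      show False
      proof (cases "m - i \<le> m0 q r")
        case True
        hence "real_of_int (m - i) \<le> of_int (m0 q r)" by linarith
        hence "c q r - x - of_int (m - i) \<ge> w q + e" using fk unfolding f_def by auto
        then show False using close i by (simp add: abs_le_iff abs_less_iff; linarith)
      next
        case False
        hence "real_of_int (m - i) \<ge> of_int (m0 q r) + 1" by linarith
        hence "x + of_int (m - i) - c q r \<ge> w q + e" using fk unfolding f_def by auto
        then show False using close i by (simp add: abs_le_iff abs_less_iff; linarith)
      qed
    qed
  qed
qed

lemma stepA:
  assumes tm: "torus_measure \<mu>" and sk: "strict_mono k"
    and wl: "torus_weak_star_lim (\<lambda>n. mu_dens \<phi> \<theta> \<psi>1 \<psi>2 \<epsilon> \<beta> M1 (k n)) \<mu>"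
    and M1: "M1 > 0" and p2: "\<And>q. q \<ge> 1 \<Longrightarrow> \<psi>2 q > 0"
    and phi_supp: "\<And>x. \<bar>x\<bar> > 1/2 \<Longrightarrow> \<phi> x = 0"
    and xs: "x \<in> torus_support \<mu>"
  shows "Wlev \<theta> \<psi>1 \<psi>2 \<epsilon> (Mseq M1 \<beta> j) x"
proof (rule ccontr)
  assume nW: "\<not> Wlev \<theta> \<psi>1 \<psi>2 \<epsilon> (Mseq M1 \<beta> j) x"
  have Mp: "Mseq M1 \<beta> j > 0" using Mseq_pos[OF M1] .
  obtain e where e: "e > 0" "e \<le> 1/2"
    and eW: "\<And>y. (\<exists>i::int. \<bar>y + of_int i - x\<bar> < e) \<Longrightarrow> \<not> Wlev \<theta> \<psi>1 \<psi>2 \<epsilon> (Mseq M1 \<beta> j) y"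
    using gap_open[OF Mp p2 nW] by blast
  define h where "h y = max 0 (cos (2 * pi * (y - x)) - cos (2 * pi * e))" for y
  have hS: "h y \<noteq> 0 \<longleftrightarrow> (\<exists>i::int. \<bar>y + of_int i - x\<bar> < e)" for y
  proof -
    have "h y \<noteq> 0 \<longleftrightarrow> cos (2 * pi * e) < cos (2 * pi * (y - x))" unfolding h_def by auto
    also have "\<dots> \<longleftrightarrow> (\<exists>i::int. \<bar>y - x + of_int i\<bar> < e)" by (rule cos_near[OF e])
    also have "\<dots> \<longleftrightarrow> (\<exists>i::int. \<bar>y + of_int i - x\<bar> < e)" by (simp add: algebra_simps)
    finally show ?thesis .
  qed
  have hnn: "h y \<ge> 0" for y unfolding h_def by simp
  have hcont: "continuous_on UNIV h" unfolding h_def by (intro continuous_intros)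
  have hper: "h (y + 1) = h y" for y
  proof -
    have "cos (2 * pi * (y + 1 - x)) = cos (2 * pi * (y - x))"
      using cos_shift_int[of "y - x" 1] by (simp add: algebra_simps)
    thus ?thesis unfolding h_def by simp
  qed
  define X where "X n = (LINT y:{0..<1}|lborel. h y * mu_dens \<phi> \<theta> \<psi>1 \<psi>2 \<epsilon> \<beta> M1 (k n) y)" for n
  have lim: "X \<longlonglongrightarrow> integral\<^sup>L \<mu> h" using wl hcont hper unfolding torus_weak_star_lim_def X_def by blast
  have X0: "X n = 0" if "n \<ge> Suc j" for n
  proof -
    have jk: "j < k n" using seq_suble[OF sk, of n] that by simp
    have "(\<lambda>y. h y * mu_dens \<phi> \<theta> \<psi>1 \<psi>2 \<epsilon> \<beta> M1 (k n) y) = (\<lambda>y. 0)"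
    proof
      fix y
      show "h y * mu_dens \<phi> \<theta> \<psi>1 \<psi>2 \<epsilon> \<beta> M1 (k n) y = 0"
      proof (cases "h y = 0")
        case False
        have nWy: "\<not> Wlev \<theta> \<psi>1 \<psi>2 \<epsilon> (Mseq M1 \<beta> j) y" using hS eW False by blast
        have "fM_per \<phi> \<theta> \<psi>1 \<psi>2 \<epsilon> (Mseq M1 \<beta> j) y = 0" 
          apply (rule fMper_zero[OF Mp])
          subgoal by (rule p2)
          subgoal by (rule phi_supp)
          subgoal by (rule nWy)
          done
        hence "mu_dens \<phi> \<theta> \<psi>1 \<psi>2 \<epsilon> \<beta> M1 (k n) y = 0" unfolding mu_dens_def
          using jk by (intro prod_zero) auto
        thus ?thesis by simp
      qed simp
    qed
    thus ?thesis unfolding X_def by simp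
  qed
  have "(\<lambda>n. X (n + Suc j)) \<longlonglongrightarrow> integral\<^sup>L \<mu> h" using LIMSEQ_ignore_initial_segment[OF lim] .
  moreover have "(\<lambda>n. X (n + Suc j)) = (\<lambda>n. 0)" using X0 by auto
  ultimately have "(\<lambda>n. 0::real) \<longlonglongrightarrow> integral\<^sup>L \<mu> h" by simp
  hence "0 = integral\<^sup>L \<mu> h" by (simp only: LIMSEQ_const_iff)
  hence int0: "integral\<^sup>L \<mu> h = 0" by simp
  have sets: "sets \<mu> = sets borel" and fin: "finite_measure \<mu>" using tm unfolding torus_measure_def by auto
  have sp: "space \<mu> = UNIV" using sets_eq_imp_space_eq[OF sets] by simp
  have hmeas: "h \<in> borel_measurable \<mu>"
    using borel_measurable_continuous_onI[OF hcont] measurable_cong_sets[OF sets refl] by blast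
  have hbound: "norm (h y) \<le> 2" for y
  proof -
    have "cos (2 * pi * (y - x)) \<le> 1" "- 1 \<le> cos (2 * pi * e)" by auto
    hence "cos (2 * pi * (y - x)) - cos (2 * pi * e) \<le> 2" by linarith
    hence "h y \<le> 2" unfolding h_def by simp
    thus ?thesis using hnn[of y] by simp
  qed
  have hint: "integrable \<mu> h"
    using finite_measure.integrable_const_bound[OF fin, of h 2] hbound hmeas by auto
  have "AE y in \<mu>. h y = 0"
    using integral_nonneg_eq_0_iff_AE[OF hint] int0 hnn by auto
  moreover have Nset: "{y \<in> space \<mu>. h y \<noteq> 0} \<in> sets \<mu>" using hmeas by measurable
  ultimately have "emeasure \<mu> {y \<in> space \<mu>. h y \<noteq> 0} = 0" using AE_iff_measurable[OF Nset] by auto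
  moreover have "{y \<in> space \<mu>. h y \<noteq> 0} = {y. \<exists>i::int. \<bar>y + of_int i - x\<bar> < e}" using hS sp by auto
  moreover have "emeasure \<mu> {y. \<exists>i::int. \<bar>y + of_int i - x\<bar> < e} > 0"
    using xs e unfolding torus_support_def by blast
  ultimately show False by simp
qed

theorem lemma9:
  fixes \<theta> \<gamma> \<epsilon> \<tau>1 \<tau>2 :: real
    and \<psi>1 \<psi>2 :: "nat \<Rightarrow> real"
    and \<phi> :: "real \<Rightarrow> real"
  defines "\<beta> \<equiv> (\<tau>1 - 1)\<^sup>2 / \<gamma>\<^sup>2 - \<epsilon>"
  assumes theta_range: "0 \<le> \<theta>" "\<theta> < 1"
    and theta_gamma: "(\<theta> = 0 \<and> \<gamma> = 1) \<or>
          (\<theta> \<notin> \<rat> \<and> dioph_good \<theta> \<noteq> {} \<and> \<gamma> = dioph_exp \<theta>)"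
    and psi_pos: "\<And>q. q \<ge> 1 \<Longrightarrow> \<psi>1 q > 0" "\<And>q. q \<ge> 1 \<Longrightarrow> \<psi>2 q > 0"
    and psi_le: "\<And>q. q \<ge> 1 \<Longrightarrow> \<psi>2 q \<le> \<psi>1 q"
    and psi1_dec: "\<And>q q'. 1 \<le> q \<Longrightarrow> q \<le> q' \<Longrightarrow> \<psi>1 q' \<le> \<psi>1 q"
    and psi2_dec: "\<And>q q'. 1 \<le> q \<Longrightarrow> q \<le> q' \<Longrightarrow> \<psi>2 q' \<le> \<psi>2 q"
    and diff_dec: "\<And>q q'. 1 \<le> q \<Longrightarrow> q \<le> q' \<Longrightarrow> \<psi>1 q' - \<psi>2 q' \<le> \<psi>1 q - \<psi>2 q"
    and tau1: "((\<lambda>q. - ln (\<psi>1 q) / ln (real q)) \<longlongrightarrow> \<tau>1) sequentially"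
    and tau2: "((\<lambda>q. - ln (\<psi>2 q) / ln (real q)) \<longlongrightarrow> \<tau>2) sequentially"
    and eps_pos: "\<epsilon> > 0"
    and phi_nonneg: "\<And>x. \<phi> x \<ge> 0"
    and phi_nonzero: "\<exists>x. \<phi> x \<noteq> 0"
    and phi_smooth: "smooth_fun \<phi>"
    and phi_supp: "\<And>x. \<bar>x\<bar> > 1/2 \<Longrightarrow> \<phi> x = 0"
    and phi_fourier: "\<exists>C R. \<forall>\<xi>. \<bar>\<xi>\<bar> \<ge> R \<longrightarrow> norm (fourier \<phi> \<xi>) \<le> C * exp (- (\<bar>\<xi>\<bar> powr (3/4)))"
    and beta_gt: "\<beta> > \<tau>2"
    and tau2_ge: "\<tau>2 \<ge> 2"
  shows "\<exists>M0. \<forall>M1 \<ge> M0. \<forall>(\<mu>::real measure) (k::nat \<Rightarrow> nat).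
           torus_measure \<mu> \<longrightarrow> strict_mono k \<longrightarrow>
           torus_weak_star_lim (\<lambda>n. mu_dens \<phi> \<theta> \<psi>1 \<psi>2 \<epsilon> \<beta> M1 (k n)) \<mu> \<longrightarrow>
           torus_support \<mu> \<subseteq> Tight \<psi>1 \<psi>2 \<theta>"
proof -
  have h\<theta>: "\<theta> = 0 \<or> \<theta> \<notin> \<rat>" using theta_gamma by auto
  have gam1: "\<gamma> \<ge> 1"
  proof (cases "\<theta> = 0 \<and> \<gamma> = 1")
    case True thus ?thesis by simp
  next
    case False
    with theta_gamma have ne: "dioph_good \<theta> \<noteq> {}" and gdef: "\<gamma> = dioph_exp \<theta>" by auto
    show ?thesis unfolding gdef dioph_exp_def
      by (rule cInf_greatest[OF ne]) (use good_gt1 in force)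
  qed
  have tau1_nn: "\<tau>1 \<ge> 0"
  proof -
    have lim0: "((\<lambda>q. - ln (\<psi>1 1) / ln (real q)) \<longlongrightarrow> 0) sequentially"
      by (rule tendsto_divide_0[OF tendsto_const], rule filterlim_at_top_imp_at_infinity,
          rule filterlim_compose[OF ln_at_top filterlim_real_sequentially])
    have ev: "eventually (\<lambda>q. - ln (\<psi>1 1) / ln (real q) \<le> - ln (\<psi>1 q) / ln (real q)) sequentially"
      using eventually_ge_at_top[of "2::nat"]
    proof eventually_elim
      case (elim q)
      have "\<psi>1 q \<le> \<psi>1 1" using psi1_dec[of 1 q] elim by simp
      hence "ln (\<psi>1 q) \<le> ln (\<psi>1 1)" using psi_pos(1)[of q] elim by simp
      moreover have "ln (real q) > 0" using elim by simp
      ultimately show ?case by (intro divide_right_mono) auto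
    qed
    show ?thesis using tendsto_le[OF sequentially_bot tau1 lim0 ev] .
  qed
  define a where "a = \<tau>1 - 1"
  have gpos0: "\<gamma> > 0" using gam1 by simp
  have bdef: "\<beta> * \<gamma>^2 = a^2 - \<epsilon> * \<gamma>^2" unfolding \<beta>_def a_def using gpos0 by (simp add: field_simps)
  have b2: "\<beta> > 2" using beta_gt tau2_ge by simp
  have a1: "a > 1"
  proof (rule ccontr)
    assume "\<not> a > 1"
    moreover have "a \<ge> -1" using tau1_nn unfolding a_def by simp
    ultimately have "\<bar>a\<bar> \<le> 1" by simp
    hence "a^2 \<le> 1" by (simp add: abs_square_le_1)
    moreover have "\<gamma>^2 \<ge> 1" using gam1 by (simp add: one_le_power)
    moreover have "(\<beta> + \<epsilon>) * \<gamma>^2 = a^2" using bdef by (simp add: algebra_simps)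
    moreover have "(\<beta> + \<epsilon>) * \<gamma>^2 \<ge> (\<beta> + \<epsilon>) * 1" using b2 eps_pos \<open>\<gamma>^2 \<ge> 1\<close> by (intro mult_left_mono) auto
    ultimately show False using b2 eps_pos by simp
  qed
  define D0 where "D0 = 2 * a + \<beta> * (2 * \<gamma> + 1)"
  have D0pos: "D0 > 0" unfolding D0_def using a1 b2 gpos0 by (simp add: add_pos_pos)
  define \<delta> where "\<delta> = min (min 1 (a/2)) (\<epsilon> * \<gamma>^2 / (2 * D0))"
  have dpos: "\<delta> > 0" unfolding \<delta>_def using a1 eps_pos gpos0 D0pos by simp
  have d1: "\<delta> \<le> 1" "\<delta> \<le> a/2" unfolding \<delta>_def by auto
  have dD: "\<delta> * D0 \<le> \<epsilon> * \<gamma>^2 / 2"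
  proof -
    have "\<delta> \<le> \<epsilon> * \<gamma>^2 / (2 * D0)" unfolding \<delta>_def by simp
    hence "\<delta> * D0 \<le> \<epsilon> * \<gamma>^2 / (2 * D0) * D0" using D0pos by (intro mult_right_mono) auto
    thus ?thesis using D0pos by simp
  qed
  define \<eta> where "\<eta> = a - \<delta>"
  have eta: "\<eta> > 0" unfolding \<eta>_def using d1 a1 by simp
  obtain g where g: "g \<ge> 1" "g \<le> \<gamma> + \<delta>" "\<theta> = 0 \<or> (\<theta> \<notin> \<rat> \<and> g \<in> dioph_good \<theta>)"
  proof (cases "\<theta> = 0")
    case True
    hence "\<gamma> = 1" using theta_gamma by auto
    thus ?thesis using that[of 1] dpos True by simp
  next
    case False
    with theta_gamma have irr: "\<theta> \<notin> \<rat>" and ne: "dioph_good \<theta> \<noteq> {}" and gdef: "\<gamma> = dioph_exp \<theta>" by auto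
    have "Inf (dioph_good \<theta>) < \<gamma> + \<delta>" using gdef dpos unfolding dioph_exp_def by simp
    then obtain g where "g \<in> dioph_good \<theta>" "g < \<gamma> + \<delta>" using cInf_lessD[OF ne] by blast
    thus ?thesis using that[of g] good_gt1[of g \<theta>] irr by auto
  qed
  have gpos: "g > 0" using g by simp
  have Delta: "\<eta>^2 - g^2*\<beta> > 0"
  proof -
    have e1: "\<eta>^2 \<ge> a^2 - 2*a*\<delta>" unfolding \<eta>_def by (simp add: power2_eq_square algebra_simps)
    have "g^2 \<le> (\<gamma> + \<delta>)^2" using g gpos by (intro power_mono) auto
    also have "\<dots> \<le> \<gamma>^2 + (2*\<gamma>+1)*\<delta>"
    proof -
      have "\<delta>^2 \<le> \<delta>" using d1 dpos by (simp add: power2_eq_square mult_le_one mult_left_le_one_le)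
      thus ?thesis by (simp add: power2_eq_square algebra_simps)
    qed
    finally have "g^2 * \<beta> \<le> (\<gamma>^2 + (2*\<gamma>+1)*\<delta>) * \<beta>" using b2 by (intro mult_right_mono) auto
    also have "\<dots> = a^2 - \<epsilon> * \<gamma>^2 + \<beta> * (2*\<gamma>+1)*\<delta>" using bdef by (simp add: algebra_simps)
    finally have e2: "g^2 * \<beta> \<le> a^2 - \<epsilon> * \<gamma>^2 + \<beta> * (2*\<gamma>+1)*\<delta>" .
    have e3: "2*a*\<delta> + \<beta> * (2*\<gamma>+1)*\<delta> \<le> \<epsilon> * \<gamma>^2 / 2" using dD unfolding D0_def by (simp add: algebra_simps)
    have "\<epsilon> * \<gamma>^2 > 0" using eps_pos gpos0 by simp
    thus ?thesis using e1 e2 e3 by linarith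
  qed
  obtain \<kappa> where kap: "\<kappa> > 0" "\<kappa> \<le> 1" and sep: "\<forall>(P::int) (D::int) (Mx::real). of_int P - \<theta> * of_int D \<noteq> 0 \<longrightarrow>
            of_int \<bar>D\<bar> \<le> Mx \<longrightarrow> 1 \<le> Mx \<longrightarrow> \<kappa> * Mx powr (1-g) \<le> \<bar>of_int P - \<theta> * of_int D\<bar>"
    using sep_core[OF g(3) g(1)] by blast
  have "eventually (\<lambda>q. 1 + \<eta> < - ln (\<psi>1 q) / ln (real q)) sequentially"
    using order_tendstoD(1)[OF tau1, of "1 + \<eta>"] dpos unfolding \<eta>_def a_def by simp
  then obtain N0 where N0: "\<And>q. q \<ge> N0 \<Longrightarrow> 1 + \<eta> < - ln (\<psi>1 q) / ln (real q)"
    unfolding eventually_sequentially by blast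
  define N1 where "N1 = max N0 4"
  have N1: "N1 \<ge> 4" unfolding N1_def by simp
  have bnd: "\<psi>1 q \<le> real q powr (-1-\<eta>)" if q: "q \<ge> N1" for q
  proof -
    have q4: "q \<ge> 4" "q \<ge> N0" using q unfolding N1_def by auto
    have lnq: "ln (real q) > 0" using q4 by simp
    have "(1 + \<eta>) * ln (real q) < - ln (\<psi>1 q)" using N0[OF q4(2)] pos_less_divide_eq[OF lnq, of "1+\<eta>" "- ln (\<psi>1 q)"] by blast
    hence "ln (\<psi>1 q) < ln (real q powr (-1-\<eta>))" using q4 by (simp add: algebra_simps)
    hence "\<psi>1 q < real q powr (-1-\<eta>)" using psi_pos(1)[of q] q4 by (subst (asm) ln_less_cancel_iff) auto
    thus ?thesis by simp
  qed
  define C where "C = (\<eta>+g)*(ln 2 - ln \<kappa>) + g^2 * ln 2"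
  define \<Delta> where "\<Delta> = \<eta>^2 - g^2*\<beta>"
  have Dp: "\<Delta> > 0" using Delta unfolding \<Delta>_def .
  show ?thesis
  proof (intro exI[of _ "max (real N1) (exp (C/\<Delta> + 1))"] allI impI subsetI)
    fix M1 :: real and \<mu> :: "real measure" and k :: "nat \<Rightarrow> nat" and x :: real
    assume M1: "max (real N1) (exp (C/\<Delta> + 1)) \<le> M1" and tm: "torus_measure \<mu>" and sk: "strict_mono k"
      and wl: "torus_weak_star_lim (\<lambda>n. mu_dens \<phi> \<theta> \<psi>1 \<psi>2 \<epsilon> \<beta> M1 (k n)) \<mu>"
      and xs: "x \<in> torus_support \<mu>"
    have M1N: "M1 \<ge> real N1" and M1e: "M1 \<ge> exp (C/\<Delta> + 1)" using M1 by auto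
    have M1p: "M1 > 0" using M1e by (meson exp_gt_zero less_le_trans)
    have "ln M1 \<ge> C/\<Delta> + 1" using M1e M1p by (metis ln_exp ln_le_cancel_iff exp_gt_zero)
    hence "\<Delta> * ln M1 \<ge> \<Delta> * (C/\<Delta> + 1)" using Dp by (intro mult_left_mono) auto
    also have "\<Delta> * (C/\<Delta> + 1) = C + \<Delta>" using Dp by (simp add: field_simps)
    finally have big: "\<Delta> * ln M1 > C" using Dp by linarith
    have W: "\<forall>j. Wlev \<theta> \<psi>1 \<psi>2 \<epsilon> (Mseq M1 \<beta> j) x"
      using stepA[OF tm sk wl M1p psi_pos(2) phi_supp xs] by blast
    then obtain qj rj mj where Wj: "\<And>j. prime (qj j) \<and> Mseq M1 \<beta> j \<le> real (qj j) \<and> real (qj j) < 2 * Mseq M1 \<beta> j \<and> rj j < qj j \<and>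
       \<bar>x + of_int (mj j) - xqr \<theta> \<psi>1 \<psi>2 \<epsilon> (Mseq M1 \<beta> j) (qj j) (rj j)\<bar> \<le> cM \<epsilon> (Mseq M1 \<beta> j) * \<psi>2 (qj j) / 2"
      unfolding Wlev_def by metis
    define Rj where "Rj j = int (rj j) - mj j * int (qj j)" for j
    have lev: "prime (qj j) \<and> Mseq M1 \<beta> j \<le> real (qj j) \<and> real (qj j) < 2 * Mseq M1 \<beta> j \<and> rj j < qj j \<and>
              (\<exists>m::int. Rj j = int (rj j) - m * int (qj j)) \<and>
              \<psi>1 (qj j) - Mseq M1 \<beta> j powr (-\<epsilon>/100) * \<psi>2 (qj j) \<le> x - (of_int (Rj j) - \<theta>) / real (qj j) \<and>
              x - (of_int (Rj j) - \<theta>) / real (qj j) \<le> \<psi>1 (qj j)" for j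
    proof -
      have qp: "real (qj j) > 0" using Wj[of j] prime_gt_0_nat by auto
      have id: "x - (of_int (Rj j) - \<theta>) / real (qj j) =
                (x + of_int (mj j) - xqr \<theta> \<psi>1 \<psi>2 \<epsilon> (Mseq M1 \<beta> j) (qj j) (rj j)) + \<psi>1 (qj j) - cM \<epsilon> (Mseq M1 \<beta> j) / 2 * \<psi>2 (qj j)"
        unfolding Rj_def xqr_def using qp by (simp add: field_simps)
      have "\<bar>x + of_int (mj j) - xqr \<theta> \<psi>1 \<psi>2 \<epsilon> (Mseq M1 \<beta> j) (qj j) (rj j)\<bar> \<le> cM \<epsilon> (Mseq M1 \<beta> j) * \<psi>2 (qj j) / 2"
        using Wj[of j] by blast
      hence "\<psi>1 (qj j) - cM \<epsilon> (Mseq M1 \<beta> j) * \<psi>2 (qj j) \<le> x - (of_int (Rj j) - \<theta>) / real (qj j) \<and>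
             x - (of_int (Rj j) - \<theta>) / real (qj j) \<le> \<psi>1 (qj j)" unfolding id by (simp add: abs_le_iff; linarith)
      thus ?thesis using Wj[of j] unfolding cM_def Rj_def by auto
    qed
    show "x \<in> Tight \<psi>1 \<psi>2 \<theta>"
    proof (rule stepB[OF h\<theta> theta_range psi_pos psi_le psi1_dec sep kap(1) bnd N1 eta gpos _ eps_pos _ _ _ Delta lev])
      show "2 \<le> \<beta>" using b2 by simp
      show "\<And>j. Mseq M1 \<beta> (Suc j) = Mseq M1 \<beta> j powr \<beta>" by simp
      show "real N1 \<le> Mseq M1 \<beta> 0" using M1N by simp
      show "(\<eta>+g)*(ln 2 - ln \<kappa>) + g^2 * ln 2 < (\<eta>^2 - g^2*\<beta>) * ln (Mseq M1 \<beta> 0)"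
        using big unfolding C_def \<Delta>_def by simp
    qed
  qed
qed

end
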